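(* There exists a locally finite poset $P$ with a minimum element such that: (a) $P$ has the Möbius nonvanishing property: for every $x\in P$, the set $\{y\in P : \mu_P(x,y)\neq 0\}$ is infinite; and (b) $P$ does not have property $\mathcal{H}_2$: there is a two-element subset $S\subset P$ such that for each $z\in S$ there are only finitely many $x\in P$ with $x\geqslant z$ and $x\not\geqslant y$ for the other element $y\in S\setminus\{z\}$. In particular, $P$ has the Möbius nonvanishing property but does not have the Möbius uncertainty property, i.e. there exist functions $f,g:P\to\mathbb{C}$, neither identically zero, with $g(z)=\sum_{x\leqslant z}f(x)$ for all $z\in P$ and both $\{x: f(x)\neq 0\}$ and $\{x:g(x)\neq0\}$ finite.
   Context: A poset is locally finite if every interval $[x,y]=\{z: x\leqslant z\leqslant y\}$ is finite. The Möbius function $\mu_P$ of $P$ is defined on pairs $x,y\in P$ by $\mu_P(x,y)=1$ if $x=y$, $\mu_P(x,y)=-\sum_{x\leqslant z<y}\mu_P(x,z)$ if $x<y$, and $\mu_P(x,y)=0$ if $x\not\leqslant y$. *)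

theory Defs
  imports Complex_Main
begin

text \<open>A poset is represented by an order relation r :: ('a * 'a) set on the
  carrier UNIV :: 'a set, i.e. (x,y) in r means x <= y.\<close>

definition Icc_rel :: "('a \<times> 'a) set \<Rightarrow> 'a \<Rightarrow> 'a \<Rightarrow> 'a set" where
  "Icc_rel r x y = {z. (x, z) \<in> r \<and> (z, y) \<in> r}"

definition locally_finite_rel :: "('a \<times> 'a) set \<Rightarrow> bool" where
  "locally_finite_rel r \<longleftrightarrow> (\<forall>x y. finite (Icc_rel r x y))"

text \<open>The extra condition card (Icc_rel r x z) < card (Icc_rel r x y)
  in the summation range is only a termination device: for a locally finite
  partial order and x <= z < y it always holds, since [x,z] is a proper subset of
  the finite set [x,y].\<close>

function mobius :: "('a \<times> 'a) set \<Rightarrow> 'a \<Rightarrow> 'a \<Rightarrow> int" where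
  "mobius r x y =
     (if x = y then 1
      else if (x, y) \<in> r then
        - (\<Sum>z\<in>{z. (x, z) \<in> r \<and> (z, y) \<in> r \<and> z \<noteq> y
                     \<and> card (Icc_rel r x z) < card (Icc_rel r x y)}. mobius r x z)
      else 0)"
  by auto
termination
  by (relation "measure (\<lambda>(r, x, y). card (Icc_rel r x y))") auto

end

theory Submission
  imports Defs
begin

definition lv :: "nat \<Rightarrow> nat" where "lv n = (n + 1) div 2"
definition R :: "(nat \<times> nat) set" where "R = {(x, y). x = y \<or> lv x < lv y}"

lemma R_iff: "(x, y) \<in> R \<longleftrightarrow> x = y \<or> lv x < lv y"
  by (simp add: R_def)

lemma le_2lv: "n \<le> 2 * lv n"
  by (simp add: lv_def)
lemma level_iff: "j \<ge> 1 \<Longrightarrow> lv z = j \<longleftrightarrow> z = 2*j-1 \<or> z = 2*j"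
  unfolding lv_def by presburger
lemma level_set: "j \<ge> 1 \<Longrightarrow> {z. lv z = j} = {2*j-1, 2*j}"
  using level_iff by blast
lemma fin_below: "finite {z. lv z < N}"
proof (rule finite_subset[of _ "{..2*N}"])
  show "{z. lv z < N} \<subseteq> {..2*N}"
  proof
    fix z assume "z \<in> {z. lv z < N}"
    then have "2 * lv z \<le> 2 * N" by simp
    then show "z \<in> {..2*N}" using le_2lv[of z] by simp
  qed
qed simp

lemma R_po: "partial_order_on UNIV R"
  unfolding partial_order_on_def preorder_on_def refl_on_def trans_def antisym_def R_def
  by auto

lemma Icc_fin: "finite (Icc_rel R x y)"
proof (rule finite_subset[of _ "{z. lv z < Suc (lv y)}"])
  show "Icc_rel R x y \<subseteq> {z. lv z < Suc (lv y)}"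
    by (auto simp: Icc_rel_def R_iff)
qed (rule fin_below)

lemma sum_levels:
  "(\<Sum>z\<in>{z. a < lv z \<and> lv z < a + Suc k}. ((-1::int) ^ (lv z - a))) = (if odd k then -2 else 0)"
proof (induction k)
  case 0
  have e: "{z. a < lv z \<and> lv z < a + Suc 0} = {}" by auto
  show ?case unfolding e by simp
next
  case (Suc k)
  define A where "A = {z. a < lv z \<and> lv z < a + Suc k}"
  define B where "B = {z. lv z = a + Suc k}"
  have eq: "{z. a < lv z \<and> lv z < a + Suc (Suc k)} = A \<union> B"
    unfolding A_def B_def by auto
  have lvl: "B = {2*(a + Suc k) - 1, 2*(a + Suc k)}"
    unfolding B_def by (rule level_set) simp
  have fin: "finite A"
    unfolding A_def by (rule finite_subset[OF _ fin_below[of "a + Suc k"]]) auto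
  have finB: "finite B" unfolding lvl by simp
  have disj: "A \<inter> B = {}" unfolding A_def B_def by auto
  have "(\<Sum>z\<in>A \<union> B. ((-1::int) ^ (lv z - a)))
      = (\<Sum>z\<in>A. ((-1::int) ^ (lv z - a))) + (\<Sum>z\<in>B. ((-1::int) ^ (lv z - a)))"
    by (rule sum.union_disjoint[OF fin finB disj])
  moreover have "(\<Sum>z\<in>B. ((-1::int) ^ (lv z - a))) = (\<Sum>z\<in>B. ((-1::int) ^ Suc k))"
    by (rule sum.cong) (auto simp: B_def)
  moreover have "(\<Sum>z\<in>B. ((-1::int) ^ Suc k)) = 2 * (-1) ^ Suc k"
    unfolding lvl by simp
  moreover have "(\<Sum>z\<in>A. ((-1::int) ^ (lv z - a))) = (if odd k then -2 else 0)"
    unfolding A_def by (rule Suc.IH)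
  ultimately have "(\<Sum>z\<in>A \<union> B. ((-1::int) ^ (lv z - a))) = (if odd k then -2 else 0) + 2 * (-1) ^ Suc k"
    by simp
  also have "\<dots> = (if odd (Suc k) then -2 else 0)" by simp
  finally show ?case unfolding eq .
qed

lemma mob_x_x: "mobius R x x = 1"
  by (subst mobius.simps) simp

lemma mob_main:
  "\<forall>x y. lv y = lv x + Suc k \<longrightarrow> mobius R x y = (-1) ^ Suc k"
proof (induction k rule: less_induct)
  case (less k)
  show ?case
  proof (intro allI impI)
    fix x y assume hy: "lv y = lv x + Suc k"
    have xy: "x \<noteq> y" using hy by auto
    have xyR: "(x, y) \<in> R" using hy by (simp add: R_iff)
    define Z where "Z = {z. (x, z) \<in> R \<and> (z, y) \<in> R \<and> z \<noteq> y
                     \<and> card (Icc_rel R x z) < card (Icc_rel R x y)}"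
    define W where "W = {z. lv x < lv z \<and> lv z < lv x + Suc k}"
    have cardlt: "card (Icc_rel R x z) < card (Icc_rel R x y)"
      if "(x, z) \<in> R" "(z, y) \<in> R" "z \<noteq> y" for z
    proof (rule psubset_card_mono[OF Icc_fin])
      have "Icc_rel R x z \<subseteq> Icc_rel R x y"
        using that R_po unfolding Icc_rel_def partial_order_on_def preorder_on_def trans_def
        by blast
      moreover have "y \<in> Icc_rel R x y" using xyR by (simp add: Icc_rel_def R_iff)
      moreover have "y \<notin> Icc_rel R x z" using that by (auto simp: Icc_rel_def R_iff)
      ultimately show "Icc_rel R x z \<subset> Icc_rel R x y" by blast
    qed
    have ZW: "Z = insert x W"
    proof
      show "Z \<subseteq> insert x W" unfolding Z_def W_def using hy by (auto simp: R_iff)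
      show "insert x W \<subseteq> Z"
      proof
        fix z assume "z \<in> insert x W"
        then have "(x, z) \<in> R" "(z, y) \<in> R" "z \<noteq> y"
          unfolding W_def using hy by (auto simp: R_iff)
        then show "z \<in> Z" unfolding Z_def using cardlt by blast
      qed
    qed
    have xW: "x \<notin> W" unfolding W_def by auto
    have finW: "finite W" unfolding W_def
      by (rule finite_subset[OF _ fin_below[of "lv x + Suc k"]]) auto
    have "mobius R x y = - (\<Sum>z\<in>Z. mobius R x z)"
      by (subst mobius.simps) (simp add: xy xyR Z_def)
    also have "(\<Sum>z\<in>Z. mobius R x z) = 1 + (\<Sum>z\<in>W. mobius R x z)"
      unfolding ZW using xW finW by (simp add: mob_x_x)
    also have "(\<Sum>z\<in>W. mobius R x z) = (\<Sum>z\<in>W. (-1::int) ^ (lv z - lv x))"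
    proof (rule sum.cong)
      fix z assume "z \<in> W"
      then have "lv z = lv x + Suc (lv z - lv x - 1)" "lv z - lv x - 1 < k"
        unfolding W_def by auto
      with less.IH show "mobius R x z = (-1) ^ (lv z - lv x)"
        by (metis Suc_diff_1 diff_add_inverse zero_less_Suc)
    qed simp
    also have "\<dots> = (if odd k then -2 else 0)" unfolding W_def by (rule sum_levels)
    finally show "mobius R x y = (-1) ^ Suc k" by auto
  qed
qed

lemma mob_nz:
  assumes h: "lv x < lv y" shows "mobius R x y \<noteq> 0"
proof -
  have "lv y = lv x + Suc (lv y - lv x - 1)" using h by simp
  then have "mobius R x y = (-1) ^ Suc (lv y - lv x - 1)" using mob_main by blast
  then show ?thesis by simp
qed

theorem theorem1p6:
  shows "\<exists>r :: (nat \<times> nat) set.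
    partial_order_on UNIV r \<and>
    locally_finite_rel r \<and>
    (\<exists>m. \<forall>x. (m, x) \<in> r) \<and>
    (\<forall>x. infinite {y. mobius r x y \<noteq> 0}) \<and>
    (\<exists>a b. a \<noteq> b \<and>
       finite {x. (a, x) \<in> r \<and> (b, x) \<notin> r} \<and>
       finite {x. (b, x) \<in> r \<and> (a, x) \<notin> r}) \<and>
    (\<exists>f g :: nat \<Rightarrow> complex.
       (\<exists>x. f x \<noteq> 0) \<and> (\<exists>x. g x \<noteq> 0) \<and>
       (\<forall>z. g z = (\<Sum>x\<in>{x. (x, z) \<in> r}. f x)) \<and>
       finite {x. f x \<noteq> 0} \<and> finite {x. g x \<noteq> 0})"
proof (intro exI[of _ R] conjI)
  show "partial_order_on UNIV R" by (rule R_po)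
  show "locally_finite_rel R" by (simp add: locally_finite_rel_def Icc_fin)
  show "\<exists>m. \<forall>x. (m, x) \<in> R" by (rule exI[of _ 0]) (auto simp: R_iff lv_def)
  show "\<forall>x. infinite {y. mobius R x y \<noteq> 0}"
  proof
    fix x
    have "{2 * lv x + 1..} \<subseteq> {y. mobius R x y \<noteq> 0}"
    proof
      fix y assume "y \<in> {2 * lv x + 1..}"
      then have "lv x < lv y" by (auto simp: lv_def)
      then show "y \<in> {y. mobius R x y \<noteq> 0}" using mob_nz by simp
    qed
    then show "infinite {y. mobius R x y \<noteq> 0}" using infinite_Ici finite_subset by blast
  qed
  show "\<exists>a b. a \<noteq> b \<and>
       finite {x. (a, x) \<in> R \<and> (b, x) \<notin> R} \<and>
       finite {x. (b, x) \<in> R \<and> (a, x) \<notin> R}"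
  proof -
    have h1: "finite {x. (1::nat, x) \<in> R \<and> (2, x) \<notin> R}"
      by (rule finite_subset[of _ "{1}"]) (auto simp: R_iff lv_def)
    have h2: "finite {x. (2::nat, x) \<in> R \<and> (1, x) \<notin> R}"
      by (rule finite_subset[of _ "{2}"]) (auto simp: R_iff lv_def)
    have "(1::nat) \<noteq> 2" by simp
    with h1 h2 show ?thesis by blast
  qed
  define f :: "nat \<Rightarrow> complex" where "f x = (if x = 1 then 1 else if x = 2 then -1 else 0)" for x
  define g :: "nat \<Rightarrow> complex" where "g z = (if z = 1 then 1 else if z = 2 then -1 else 0)" for z
  show "\<exists>f g :: nat \<Rightarrow> complex.
       (\<exists>x. f x \<noteq> 0) \<and> (\<exists>x. g x \<noteq> 0) \<and>
       (\<forall>z. g z = (\<Sum>x\<in>{x. (x, z) \<in> R}. f x)) \<and>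
       finite {x. f x \<noteq> 0} \<and> finite {x. g x \<noteq> 0}"
  proof (rule exI[of _ f], rule exI[of _ g], intro conjI allI)
    show "\<exists>x. f x \<noteq> 0" by (rule exI[of _ 1]) (simp add: f_def)
    show "\<exists>x. g x \<noteq> 0" by (rule exI[of _ 1]) (simp add: g_def)
    show "finite {x. f x \<noteq> 0}" by (rule finite_subset[of _ "{1,2}"]) (auto simp: f_def)
    show "finite {x. g x \<noteq> 0}" by (rule finite_subset[of _ "{1,2}"]) (auto simp: g_def)
    fix z
    have finS: "finite {x. (x, z) \<in> R}"
      by (rule finite_subset[OF _ fin_below[of "Suc (lv z)"]]) (auto simp: R_iff)
    have "(\<Sum>x\<in>{x. (x, z) \<in> R}. f x) = (\<Sum>x\<in>{x. (x, z) \<in> R} \<inter> {1,2}. f x)"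
      by (rule sum.mono_neutral_right) (use finS in \<open>auto simp: f_def\<close>)
    also have "\<dots> = g z"
    proof (cases "z = 0 \<or> z = 1 \<or> z = 2")
      case True
      then show ?thesis
      proof (elim disjE)
        assume "z = 0"
        then have "{x. (x, z) \<in> R} \<inter> {1,2} = {}" by (auto simp: R_iff lv_def)
        then show ?thesis using \<open>z = 0\<close> by (simp add: g_def)
      next
        assume "z = 1"
        then have "{x. (x, z) \<in> R} \<inter> {1,2} = {1}" by (auto simp: R_iff lv_def)
        then show ?thesis using \<open>z = 1\<close> by (simp add: g_def f_def)
      next
        assume "z = 2"
        then have "{x. (x, z) \<in> R} \<inter> {1,2} = {2}" by (auto simp: R_iff lv_def)
        then show ?thesis using \<open>z = 2\<close> by (simp add: g_def f_def)
      qed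
    next
      case False
      then have "lv z > 1" by (auto simp: lv_def)
      then have "{x. (x, z) \<in> R} \<inter> {1,2} = {1,2}" by (auto simp: R_iff lv_def)
      then show ?thesis using False by (simp add: g_def f_def)
    qed
    finally show "g z = (\<Sum>x\<in>{x. (x, z) \<in> R}. f x)" by simp
  qed
qed

end
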